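(* Let $\Sigma$ be a finite alphabet, $L \subseteq \Sigma^*$ regular, and $\mathcal{A}=(Q,\Sigma,q_0,\delta,F)$ its minimal DFA. Then $L\in\mathsf{F}(\mathcal{O}(1))$ if and only if for all $x,y \in \Sigma^*$ with $|x|=|y|$ and all $z \in \Sigma^{|Q|}$ we have $\mathcal{A}(xz) = \mathcal{A}(yz)$.
   Context: $\mathcal{A}(w)=\delta(q_0,w)$ denotes the state reached on input $w$. Fix $a\in\Sigma$; $\mathrm{last}_n(a_1\cdots a_m)=a_{m-n+1}\cdots a_m$ if $n\le m$, else $a^{n-m}a_1\cdots a_m$. A fixed-size sliding window algorithm for $L$ is a sequence $(\mathcal{A}_n)_{n\ge0}$ of deterministic (possibly infinite-state) automata with injective encodings of states into bit strings, $\mathcal{A}_n$ accepting $\{w:\mathrm{last}_n(w)\in L\}$; its space complexity at $n$ is the maximal encoding length of a state of $\mathcal{A}_n$. $\mathsf{F}(\mathcal{O}(1))$ is the class of languages having such an algorithm with constant space complexity. *)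

theory Defs
  imports Main
begin

definition dfa :: "'s set \<Rightarrow> 's \<Rightarrow> ('s \<Rightarrow> 'a \<Rightarrow> 's) \<Rightarrow> 's set \<Rightarrow> bool" where
  "dfa Q q0 \<delta> F \<longleftrightarrow> finite Q \<and> q0 \<in> Q \<and> (\<forall>q\<in>Q. \<forall>s. \<delta> q s \<in> Q) \<and> F \<subseteq> Q"

definition dfa_lang :: "'s \<Rightarrow> ('s \<Rightarrow> 'a \<Rightarrow> 's) \<Rightarrow> 's set \<Rightarrow> 'a list set" where
  "dfa_lang q0 \<delta> F = {w. foldl \<delta> q0 w \<in> F}"

definition regular :: "'a list set \<Rightarrow> bool" where
  "regular L \<longleftrightarrow> (\<exists>(Q::nat set) q0 \<delta> F. dfa Q q0 \<delta> F \<and> L = dfa_lang q0 \<delta> F)"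

definition minimal_dfa :: "'a list set \<Rightarrow> 's set \<Rightarrow> 's \<Rightarrow> ('s \<Rightarrow> 'a \<Rightarrow> 's) \<Rightarrow> 's set \<Rightarrow> bool" where
  "minimal_dfa L Q q0 \<delta> F \<longleftrightarrow> dfa Q q0 \<delta> F \<and> L = dfa_lang q0 \<delta> F
     \<and> (\<forall>q\<in>Q. \<exists>w. foldl \<delta> q0 w = q)
     \<and> (\<forall>p\<in>Q. \<forall>q\<in>Q. p \<noteq> q \<longrightarrow> (\<exists>w. (foldl \<delta> p w \<in> F) \<noteq> (foldl \<delta> q w \<in> F)))"

definition last_n :: "'a \<Rightarrow> nat \<Rightarrow> 'a list \<Rightarrow> 'a list" where
  "last_n a n w = (if n \<le> length w then drop (length w - n) w
                   else replicate (n - length w) a @ w)"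

text \<open>States of A_n are identified with their
  (injective) bit-string encodings, so A_n is given by a state set Qs n of bit strings,
  an initial state, a transition function and a set of accepting states.\<close>
definition sliding_window_alg ::
  "'a \<Rightarrow> 'a list set \<Rightarrow> (nat \<Rightarrow> bool list set) \<Rightarrow> (nat \<Rightarrow> bool list)
    \<Rightarrow> (nat \<Rightarrow> bool list \<Rightarrow> 'a \<Rightarrow> bool list) \<Rightarrow> (nat \<Rightarrow> bool list set) \<Rightarrow> bool" where
  "sliding_window_alg a L Qs init dl acc \<longleftrightarrow>
     (\<forall>n. init n \<in> Qs n \<and> (\<forall>q\<in>Qs n. \<forall>s. dl n q s \<in> Qs n) \<and> acc n \<subseteq> Qs n
        \<and> (\<forall>w. foldl (dl n) (init n) w \<in> acc n \<longleftrightarrow> last_n a n w \<in> L))"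

text \<open>Class F(O(1)): a sliding window algorithm whose space complexity
  (maximal encoding length of a state of A_n) is bounded by a constant.\<close>
definition in_F_O1 :: "'a \<Rightarrow> 'a list set \<Rightarrow> bool" where
  "in_F_O1 a L \<longleftrightarrow> (\<exists>Qs init dl acc (c::nat). sliding_window_alg a L Qs init dl acc
       \<and> (\<forall>n. \<forall>q\<in>Qs n. length q \<le> c))"

end

theory Submission
  imports Defs
begin


lemma last_n_len: "length (last_n a n w) = n"
  by (auto simp: last_n_def)

lemma last_n_nil: "last_n a m [] = replicate m a"
  by (simp add: last_n_def)

lemma last_n_snoc: "tl (last_n a m w @ [s]) = last_n a m (w @ [s])"
proof (cases "m \<le> length w")
  case True
  have "drop (length w - m) w @ [s] = drop (length w - m) (w @ [s])" by simp
  then have "tl (drop (length w - m) w @ [s]) = drop (Suc (length w - m)) (w @ [s])"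
    by (metis drop_Suc drop_drop tl_drop plus_1_eq_Suc drop_0 tl_append2 Nil_is_append_conv not_Cons_self2)
  moreover have "Suc (length w - m) = length (w @ [s]) - m" using True by simp
  ultimately show ?thesis using True by (simp add: last_n_def)
next
  case False
  then obtain d where d: "m = length w + Suc d" by (metis add_Suc_right less_imp_Suc_add not_le_imp_less)
  show ?thesis
  proof (cases d)
    case 0 then show ?thesis using d by (simp add: last_n_def)
  next
    case (Suc e) then show ?thesis using d by (simp add: last_n_def)
  qed
qed

lemma last_n_split:
  assumes "k \<le> n"
  shows "last_n a n w = take (n - k) (last_n a n w) @ last_n a k w"
proof -
  have "drop (n - k) (last_n a n w) = last_n a k w"
  proof (cases "n \<le> length w")
    case True then show ?thesis using assms by (simp add: last_n_def)
  next
    case False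
    show ?thesis
    proof (cases "k \<le> length w")
      case True then show ?thesis using assms False by (simp add: last_n_def)
    next
      case F2: False then show ?thesis using assms False by (simp add: last_n_def)
    qed
  qed
  then show ?thesis by (metis append_take_drop_id)
qed

lemma last_n_exact: "length w = n \<Longrightarrow> last_n a n w = w"
  by (simp add: last_n_def)

lemma last_n_common:
  assumes "n \<le> length X"
  shows "last_n a n (P @ X) = last_n a n X"
  using assms by (simp add: last_n_def)



definition Erel :: "'s set \<Rightarrow> ('s \<Rightarrow> 'a \<Rightarrow> 's) \<Rightarrow> nat \<Rightarrow> ('s \<times> 's) set" where
  "Erel Q \<delta> j = {(p,q). p \<in> Q \<and> q \<in> Q \<and> (\<forall>w. length w = j \<longrightarrow> foldl \<delta> p w = foldl \<delta> q w)}"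

lemma classes_less:
  assumes fin: "finite Q" and e1: "equiv Q E" and e2: "equiv Q E'"
    and sub: "E \<subseteq> E'" and ne: "E \<noteq> E'"
  shows "card ((\<lambda>p. E'``{p}) ` Q) < card ((\<lambda>p. E``{p}) ` Q)"
proof -
  let ?g = "\<lambda>X. E'``X"
  have tr: "trans E'" and sy: "sym E'" using e2 by (auto simp: equiv_def)
  have E'Q: "E' \<subseteq> Q \<times> Q" using e2 by (auto simp: equiv_def refl_on_def)
  have rE: "(p,p) \<in> E" if "p \<in> Q" for p using e1 that by (auto simp: equiv_def refl_on_def)
  have key: "E'``(E``{p}) = E'``{p}" if "p \<in> Q" for p
  proof
    show "E'``(E``{p}) \<subseteq> E'``{p}"
    proof
      fix y assume "y \<in> E'``(E``{p})"
      then obtain x where "(p,x) \<in> E" "(x,y) \<in> E'" by auto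
      then have "(p,x) \<in> E'" "(x,y) \<in> E'" using sub by auto
      then have "(p,y) \<in> E'" using tr by (meson transD)
      then show "y \<in> E'``{p}" by simp
    qed
    show "E'``{p} \<subseteq> E'``(E``{p})" using rE[OF that] by blast
  qed
  have img: "(\<lambda>p. E'``{p}) ` Q = ?g ` ((\<lambda>p. E``{p}) ` Q)"
    using key by (auto simp: image_image intro!: image_cong)
  obtain p q where pq: "(p,q) \<in> E'" "(p,q) \<notin> E" using sub ne by auto
  have pQ: "p \<in> Q" "q \<in> Q" using pq E'Q by auto
  have "E``{p} \<noteq> E``{q}"
  proof
    assume "E``{p} = E``{q}"
    moreover have "q \<in> E``{q}" using rE pQ by blast
    ultimately have "(p,q) \<in> E" by auto
    then show False using pq by simp
  qed
  moreover have "?g (E``{p}) = ?g (E``{q})"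
  proof -
    have "E'``{p} = E'``{q}" using e2 pq(1) by (simp add: equiv_class_eq)
    then show ?thesis using key pQ by simp
  qed
  ultimately have "\<not> inj_on ?g ((\<lambda>p. E``{p}) ` Q)"
    using pQ unfolding inj_on_def by blast
  then have "card (?g ` ((\<lambda>p. E``{p}) ` Q)) \<noteq> card ((\<lambda>p. E``{p}) ` Q)"
    using fin inj_on_iff_eq_card by blast
  moreover have "card (?g ` ((\<lambda>p. E``{p}) ` Q)) \<le> card ((\<lambda>p. E``{p}) ` Q)"
    using fin by (simp add: card_image_le)
  ultimately show ?thesis using img by simp
qed

context
  fixes Q :: "'s set" and q0 and \<delta> :: "'s \<Rightarrow> 'a \<Rightarrow> 's" and F
  assumes D: "dfa Q q0 \<delta> F"
begin

lemma Erel_equiv: "equiv Q (Erel Q \<delta> j)"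
proof (rule equivI)
  show "refl_on Q (Erel Q \<delta> j)" unfolding refl_on_def Erel_def by auto
  show "sym (Erel Q \<delta> j)" unfolding sym_def Erel_def by auto
  show "trans (Erel Q \<delta> j)" unfolding trans_def Erel_def by simp
  show "Erel Q \<delta> j \<subseteq> Q \<times> Q" unfolding Erel_def by auto
qed

lemma Erel_mono1: "Erel Q \<delta> j \<subseteq> Erel Q \<delta> (Suc j)"
proof clarify
  fix p q assume a: "(p,q) \<in> Erel Q \<delta> j"
  show "(p,q) \<in> Erel Q \<delta> (Suc j)" unfolding Erel_def
  proof (clarify, intro conjI allI impI)
    show "p \<in> Q" "q \<in> Q" using a by (auto simp: Erel_def)
    fix w :: "'a list" assume "length w = Suc j"
    then obtain v c where "w = v @ [c]" "length v = j" by (cases w rule: rev_cases) auto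
    then show "foldl \<delta> p w = foldl \<delta> q w" using a by (simp add: Erel_def)
  qed
qed

lemma Erel_mono: "i \<le> j \<Longrightarrow> Erel Q \<delta> i \<subseteq> Erel Q \<delta> j"
proof (induction j rule: dec_induct)
  case (step n) then show ?case using Erel_mono1[of n] by blast
qed simp

lemma Erel_Suc: "Erel Q \<delta> (Suc j) = {(p,q). p \<in> Q \<and> q \<in> Q \<and> (\<forall>c. (\<delta> p c, \<delta> q c) \<in> Erel Q \<delta> j)}"
proof -
  have cl: "\<delta> p c \<in> Q" if "p \<in> Q" for p c using D that unfolding dfa_def by blast
  show ?thesis
  proof (intro set_eqI iffI)
    fix x assume "x \<in> Erel Q \<delta> (Suc j)"
    then obtain p q where x: "x = (p,q)" "p \<in> Q" "q \<in> Q" "\<forall>w. length w = Suc j \<longrightarrow> foldl \<delta> p w = foldl \<delta> q w"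
      by (auto simp: Erel_def)
    have "(\<delta> p c, \<delta> q c) \<in> Erel Q \<delta> j" for c
      unfolding Erel_def using x(2,3,4) cl by (auto dest: spec[of _ "c # _"])
    then show "x \<in> {(p,q). p \<in> Q \<and> q \<in> Q \<and> (\<forall>c. (\<delta> p c, \<delta> q c) \<in> Erel Q \<delta> j)}" using x by auto
  next
    fix x assume "x \<in> {(p,q). p \<in> Q \<and> q \<in> Q \<and> (\<forall>c. (\<delta> p c, \<delta> q c) \<in> Erel Q \<delta> j)}"
    then obtain p q where x: "x = (p,q)" "p \<in> Q" "q \<in> Q" "\<forall>c. (\<delta> p c, \<delta> q c) \<in> Erel Q \<delta> j" by auto
    have "foldl \<delta> p w = foldl \<delta> q w" if "length w = Suc j" for w
    proof -
      obtain c v where "w = c # v" "length v = j" using \<open>length w = Suc j\<close> by (cases w) auto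
      then show ?thesis using x(4)[rule_format, of c] by (simp add: Erel_def)
    qed
    then show "x \<in> Erel Q \<delta> (Suc j)" using x by (simp add: Erel_def)
  qed
qed

lemma Erel_stable: "Erel Q \<delta> j = Erel Q \<delta> (Suc j) \<Longrightarrow> Erel Q \<delta> (i + j) = Erel Q \<delta> j"
proof (induction i)
  case (Suc i)
  have "Erel Q \<delta> (Suc (i + j)) = Erel Q \<delta> (Suc j)"
    using Erel_Suc[of "i + j"] Erel_Suc[of j] Suc.IH[OF Suc.prems] by simp
  then show ?case using Suc.prems by simp
qed simp

lemma Erel_classes: "card ((\<lambda>p. Erel Q \<delta> j``{p}) ` Q) \<ge> 1"
proof -
  have "q0 \<in> Q" "finite Q" using D unfolding dfa_def by auto
  then have "(\<lambda>p. Erel Q \<delta> j``{p}) ` Q \<noteq> {}" "finite ((\<lambda>p. Erel Q \<delta> j``{p}) ` Q)" by auto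
  then show ?thesis by (metis One_nat_def Suc_leI card_gt_0_iff)
qed

lemma Erel_reaches: "\<exists>j < card Q. Erel Q \<delta> j = Erel Q \<delta> (Suc j)"
proof (rule ccontr)
  assume "\<not> ?thesis"
  then have ne: "\<And>j. j < card Q \<Longrightarrow> Erel Q \<delta> j \<noteq> Erel Q \<delta> (Suc j)" by auto
  have fin: "finite Q" using D unfolding dfa_def by auto
  have "card ((\<lambda>p. Erel Q \<delta> j``{p}) ` Q) + j \<le> card Q" if "j \<le> card Q" for j
    using that
  proof (induction j)
    case 0 then show ?case using fin card_image_le by auto
  next
    case (Suc j)
    have "card ((\<lambda>p. Erel Q \<delta> (Suc j)``{p}) ` Q) < card ((\<lambda>p. Erel Q \<delta> j``{p}) ` Q)"
      by (rule classes_less[OF fin Erel_equiv Erel_equiv Erel_mono1 ne]) (use Suc in auto)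
    then show ?case using Suc by auto
  qed
  from this[of "card Q"] Erel_classes[of "card Q"] show False by simp
qed

lemma Erel_reduce: "Erel Q \<delta> K \<subseteq> Erel Q \<delta> (card Q)"
proof -
  obtain j where j: "j < card Q" "Erel Q \<delta> j = Erel Q \<delta> (Suc j)" using Erel_reaches by blast
  show ?thesis
  proof (cases "K \<le> j")
    case True then show ?thesis using Erel_mono[of K j] Erel_mono[of j "card Q"] j by auto
  next
    case False
    then have "Erel Q \<delta> K = Erel Q \<delta> j" using Erel_stable[OF j(2), of "K - j"] by simp
    then show ?thesis using Erel_mono[of j "card Q"] j by auto
  qed
qed

end


lemma foldl_pump: "foldl g s u = s \<Longrightarrow> foldl g s (concat (replicate r u)) = s"
  by (induction r) auto

lemma sw_closed:
  assumes "sliding_window_alg a L Qs init dl acc"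
  shows "foldl (dl n) (init n) w \<in> Qs n"
proof (induction w rule: rev_induct)
  case Nil then show ?case using assms by (simp add: sliding_window_alg_def)
next
  case (snoc x xs) then show ?case using assms by (simp add: sliding_window_alg_def)
qed

lemma sw_acc:
  assumes "sliding_window_alg a L Qs init dl acc"
  shows "foldl (dl n) (init n) w \<in> acc n \<longleftrightarrow> last_n a n w \<in> L"
  using assms by (simp add: sliding_window_alg_def)

lemma window_suffix:
  fixes L :: "'a list set" and c :: nat
  assumes SW: "sliding_window_alg a L Qs init dl acc"
    and bnd: "\<forall>n. \<forall>q\<in>Qs n. length q \<le> c"
    and len: "length \<gamma> = length \<gamma>'"
    and K: "card ({xs::bool list. length xs \<le> c} \<times> {xs::bool list. length xs \<le> c}) \<le> length \<beta>"
  shows "\<gamma> @ \<beta> \<in> L \<longleftrightarrow> \<gamma>' @ \<beta> \<in> L"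
proof -
  define B where "B = {xs::bool list. length xs \<le> c}"
  have finB: "finite B"
    using finite_lists_length_le[of "UNIV::bool set" c] unfolding B_def by simp
  define K where "K = card (B \<times> B)"
  have finBB: "finite (B \<times> B)" using finB by simp
  define n where "n = length (\<gamma> @ \<beta>)"
  have n': "n = length (\<gamma>' @ \<beta>)" using len n_def by simp
  define g where "g = dl n"
  define s where "s i = foldl g (init n) (\<gamma> @ take i \<beta>)" for i
  define s' where "s' i = foldl g (init n) (\<gamma>' @ take i \<beta>)" for i
  define f where "f i = (s i, s' i)" for i
  have fB: "f ` {0..K} \<subseteq> B \<times> B"
  proof -
    have "length (foldl (dl n) (init n) w) \<le> c" for w using sw_closed[OF SW, of n w] bnd by blast
    then show ?thesis unfolding f_def s_def s'_def g_def B_def by blast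
  qed
  have "card (f ` {0..K}) \<le> K"
    using card_mono[OF finBB fB] unfolding K_def by simp
  then have "card {0..K} > card (f ` {0..K})" by simp
  then have "\<not> inj_on f {0..K}" by (rule pigeonhole)
  then obtain i j where ij0: "i \<in> {0..K}" "j \<in> {0..K}" "i \<noteq> j" "f i = f j"
    unfolding inj_on_def by blast
  obtain i j where ij: "i < j" "j \<le> K" "s i = s j" "s' i = s' j"
  proof (cases "i < j")
    case True then show ?thesis using that ij0 unfolding f_def by auto
  next
    case False then show ?thesis using that[of j i] ij0 unfolding f_def by auto
  qed
  have jb: "j \<le> length \<beta>" using ij K unfolding K_def B_def by simp
  define u where "u = drop i (take j \<beta>)"
  define \<beta>2 where "\<beta>2 = drop j \<beta>"
  have tj: "take j \<beta> = take i \<beta> @ u"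
    unfolding u_def using ij(1) by (metis append_take_drop_id less_imp_le_nat min.absorb1 take_take)
  have bsplit: "\<beta> = take i \<beta> @ u @ \<beta>2" unfolding \<beta>2_def using tj by (metis append.assoc append_take_drop_id)
  have ulen: "length u = j - i" unfolding u_def using jb by simp
  define X where "X = concat (replicate n u) @ \<beta>2"
  have Xlen: "n \<le> length X"
  proof -
    have "length (concat (replicate n u)) = n * length u" by (simp add: length_concat sum_list_replicate)
    moreover have "length u \<ge> 1" using ulen ij by simp
    moreover have "n \<le> n * length u" using \<open>length u \<ge> 1\<close> by (metis mult.right_neutral mult_le_mono2)
    ultimately show ?thesis unfolding X_def by (simp add: trans_le_add1)
  qed
  have loop: "foldl g (s i) u = s i"
    using ij(3) unfolding s_def by (simp add: tj)
  have loop': "foldl g (s' i) u = s' i"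
    using ij(4) unfolding s'_def by (simp add: tj)
  have e1: "foldl g (init n) (\<gamma> @ take i \<beta> @ X) = foldl g (init n) (\<gamma> @ \<beta>)"
  proof -
    have "foldl g (init n) (\<gamma> @ take i \<beta> @ X) = foldl g (s i) X" unfolding s_def by simp
    also have "\<dots> = foldl g (s i) \<beta>2" unfolding X_def by (simp add: foldl_pump[OF loop])
    also have "\<dots> = foldl g (foldl g (s i) u) \<beta>2" using loop by simp
    also have "\<dots> = foldl g (init n) (\<gamma> @ \<beta>)"
      by (subst bsplit) (simp add: s_def)
    finally show ?thesis .
  qed
  have e2: "foldl g (init n) (\<gamma>' @ take i \<beta> @ X) = foldl g (init n) (\<gamma>' @ \<beta>)"
  proof -
    have "foldl g (init n) (\<gamma>' @ take i \<beta> @ X) = foldl g (s' i) X" unfolding s'_def by simp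
    also have "\<dots> = foldl g (s' i) \<beta>2" unfolding X_def by (simp add: foldl_pump[OF loop'])
    also have "\<dots> = foldl g (foldl g (s' i) u) \<beta>2" using loop' by simp
    also have "\<dots> = foldl g (init n) (\<gamma>' @ \<beta>)"
      by (subst bsplit) (simp add: s'_def)
    finally show ?thesis .
  qed
  have "\<gamma> @ \<beta> \<in> L \<longleftrightarrow> last_n a n (\<gamma> @ \<beta>) \<in> L" using n_def by (simp add: last_n_exact)
  also have "\<dots> \<longleftrightarrow> foldl g (init n) (\<gamma> @ \<beta>) \<in> acc n" unfolding g_def using sw_acc[OF SW, of n "\<gamma> @ \<beta>"] by simp
  also have "\<dots> \<longleftrightarrow> foldl g (init n) ((\<gamma> @ take i \<beta>) @ X) \<in> acc n" using e1 by simp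
  also have "\<dots> \<longleftrightarrow> last_n a n ((\<gamma> @ take i \<beta>) @ X) \<in> L" unfolding g_def by (rule sw_acc[OF SW])
  also have "\<dots> \<longleftrightarrow> last_n a n X \<in> L" using Xlen by (simp only: last_n_common)
  also have "\<dots> \<longleftrightarrow> last_n a n ((\<gamma>' @ take i \<beta>) @ X) \<in> L" using Xlen by (simp only: last_n_common)
  also have "\<dots> \<longleftrightarrow> foldl g (init n) ((\<gamma>' @ take i \<beta>) @ X) \<in> acc n" unfolding g_def by (rule sw_acc[OF SW, symmetric])
  also have "\<dots> \<longleftrightarrow> foldl g (init n) (\<gamma>' @ \<beta>) \<in> acc n" using e2 by simp
  also have "\<dots> \<longleftrightarrow> last_n a n (\<gamma>' @ \<beta>) \<in> L" unfolding g_def by (rule sw_acc[OF SW])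
  also have "\<dots> \<longleftrightarrow> \<gamma>' @ \<beta> \<in> L" using n' by (simp add: last_n_exact)
  finally show ?thesis .
qed



lemma dfa_closed: "dfa Q q0 \<delta> F \<Longrightarrow> p \<in> Q \<Longrightarrow> foldl \<delta> p w \<in> Q"
  by (induction w arbitrary: p) (auto simp: dfa_def)

lemma forward:
  fixes L :: "'a list set"
  assumes M: "minimal_dfa L Q q0 \<delta> F" and FO: "in_F_O1 a L"
  shows "\<forall>x y z. length x = length y \<longrightarrow> length z = card Q \<longrightarrow>
       foldl \<delta> q0 (x @ z) = foldl \<delta> q0 (y @ z)"
proof (intro allI impI)
  fix x y z :: "'a list" assume xy: "length x = length y" and z: "length z = card Q"
  have D: "dfa Q q0 \<delta> F" and Ld: "L = dfa_lang q0 \<delta> F"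
    and dist: "\<forall>p\<in>Q. \<forall>q\<in>Q. p \<noteq> q \<longrightarrow> (\<exists>w. (foldl \<delta> p w \<in> F) \<noteq> (foldl \<delta> q w \<in> F))"
    using M by (auto simp: minimal_dfa_def)
  have q0Q: "q0 \<in> Q" using D by (simp add: dfa_def)
  obtain Qs init dl acc c where SW: "sliding_window_alg a L Qs init dl acc"
    and bnd: "\<forall>n. \<forall>q\<in>Qs n. length q \<le> c"
    using FO unfolding in_F_O1_def by blast
  define K where "K = card ({xs::bool list. length xs \<le> c} \<times> {xs::bool list. length xs \<le> c})"
  have "(foldl \<delta> q0 x, foldl \<delta> q0 y) \<in> Erel Q \<delta> K"
    unfolding Erel_def
  proof (clarify, intro conjI allI impI)
    show "foldl \<delta> q0 x \<in> Q" "foldl \<delta> q0 y \<in> Q" using dfa_closed[OF D q0Q] by auto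
    fix w :: "'a list" assume w: "length w = K"
    let ?p = "foldl \<delta> (foldl \<delta> q0 x) w" and ?q = "foldl \<delta> (foldl \<delta> q0 y) w"
    show "?p = ?q"
    proof (rule ccontr)
      assume "?p \<noteq> ?q"
      moreover have "?p \<in> Q" "?q \<in> Q" using dfa_closed[OF D] dfa_closed[OF D q0Q] by auto
      ultimately obtain v where v: "(foldl \<delta> ?p v \<in> F) \<noteq> (foldl \<delta> ?q v \<in> F)" using dist by blast
      have "x @ (w @ v) \<in> L \<longleftrightarrow> y @ (w @ v) \<in> L"
        by (rule window_suffix[OF SW bnd xy]) (use w K_def in simp)
      then show False using v unfolding Ld dfa_lang_def by simp
    qed
  qed
  then have "(foldl \<delta> q0 x, foldl \<delta> q0 y) \<in> Erel Q \<delta> (card Q)"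
    using Erel_reduce[OF D] by blast
  then show "foldl \<delta> q0 (x @ z) = foldl \<delta> q0 (y @ z)"
    using z unfolding Erel_def by simp
qed



lemma backward:
  fixes L :: "('a::finite) list set" and a :: 'a
  assumes M: "minimal_dfa L Q q0 \<delta> F"
    and H: "\<forall>x y z. length x = length y \<longrightarrow> length z = card Q \<longrightarrow>
       foldl \<delta> q0 (x @ z) = foldl \<delta> q0 (y @ z)"
  shows "in_F_O1 a L"
proof -
  have Ld: "L = dfa_lang q0 \<delta> F" using M by (simp add: minimal_dfa_def)
  define k where "k = card Q"
  define S where "S = {v::'a list. length v \<le> k}"
  have finS: "finite S"
    using finite_lists_length_le[of "UNIV::'a set" k] unfolding S_def by simp
  define N where "N = card S"
  define T where "T = {bs::bool list. length bs = N}"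
  have finT: "finite T" using finite_lists_length_eq[of "UNIV::bool set" N] unfolding T_def by simp
  have cT: "card T = 2 ^ N" using card_lists_length_eq[of "UNIV::bool set" N] unfolding T_def by simp
  have "card S \<le> card T" unfolding cT N_def by (simp add: less_imp_le_nat)
  then obtain enc where encT: "enc ` S \<subseteq> T" and inj: "inj_on enc S"
    using card_le_inj[OF finS finT] by blast
  define m where "m (n::nat) = min n k" for n
  define Qs where "Qs n = enc ` {v. length v = m n}" for n
  define init where "init n = enc (replicate (m n) a)" for n
  define dl where "dl (n::nat) q (s::'a) = enc (tl (inv_into S enc q @ [s]))" for n q s
  define acc where "acc n = enc ` {v. length v = m n \<and> (if n \<le> k then v \<in> L else replicate (n - k) a @ v \<in> L)}" for n
  have inS: "length v = m n \<Longrightarrow> v \<in> S" for v :: "'a list" and n :: nat unfolding S_def m_def by simp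
  have inv: "length v = m n \<Longrightarrow> inv_into S enc (enc v) = v" for v :: "'a list" and n :: nat
    using inv_into_f_f[OF inj inS] by blast
  have run: "foldl (dl n) (init n) w = enc (last_n a (m n) w)" for n :: nat and w :: "'a list"
  proof (induction w rule: rev_induct)
    case Nil then show ?case by (simp add: init_def last_n_nil)
  next
    case (snoc s w)
    have "foldl (dl n) (init n) (w @ [s]) = enc (tl (last_n a (m n) w @ [s]))"
    proof -
      have "foldl (dl n) (init n) (w @ [s]) = dl n (foldl (dl n) (init n) w) s" by simp
      also have "\<dots> = dl n (enc (last_n a (m n) w)) s" using snoc.IH by simp
      also have "\<dots> = enc (tl (last_n a (m n) w @ [s]))" unfolding dl_def using inv[OF last_n_len] by simp
      finally show ?thesis .
    qed
    then show ?case by (simp add: last_n_snoc)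
  qed
  have "sliding_window_alg a L Qs init dl acc"
    unfolding sliding_window_alg_def
  proof (intro allI conjI ballI)
    fix n
    show "init n \<in> Qs n" unfolding init_def Qs_def by simp
    show "acc n \<subseteq> Qs n" unfolding acc_def Qs_def by auto
    fix q s assume "q \<in> Qs n"
    then obtain v where v: "q = enc v" "length v = m n" unfolding Qs_def by auto
    then have "length (tl (v @ [s])) = m n" by simp
    then show "dl n q s \<in> Qs n" unfolding dl_def Qs_def using v inv by auto
  next
    fix n w
    let ?v = "last_n a (m n) w"
    have lv: "length ?v = m n" by (rule last_n_len)
    have "foldl (dl n) (init n) w \<in> acc n \<longleftrightarrow> (if n \<le> k then ?v \<in> L else replicate (n - k) a @ ?v \<in> L)"
    proof -
      have "enc ?v \<in> acc n \<longleftrightarrow> ?v \<in> {v. length v = m n \<and> (if n \<le> k then v \<in> L else replicate (n - k) a @ v \<in> L)}"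
        unfolding acc_def
        by (rule inj_on_image_mem_iff[OF inj]) (use inS lv in auto)
      then show ?thesis using run lv by simp
    qed
    also have "\<dots> \<longleftrightarrow> last_n a n w \<in> L"
    proof (cases "n \<le> k")
      case True then show ?thesis by (simp add: m_def)
    next
      case False
      then have mk: "m n = k" by (simp add: m_def)
      define P where "P = take (n - k) (last_n a n w)"
      have sp: "last_n a n w = P @ last_n a k w" unfolding P_def using False last_n_split[of k n a w] by simp
      have lP: "length P = length (replicate (n - k) a)" unfolding P_def using last_n_len[of a n w] by simp
      have eq: "foldl \<delta> q0 (P @ last_n a k w) = foldl \<delta> q0 (replicate (n - k) a @ last_n a k w)"
        using H lP last_n_len[of a k w] unfolding k_def by blast
      show ?thesis using False mk sp eq unfolding Ld dfa_lang_def by simp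
    qed
    finally show "foldl (dl n) (init n) w \<in> acc n \<longleftrightarrow> last_n a n w \<in> L" .
  qed
  moreover have "\<forall>n. \<forall>q\<in>Qs n. length q \<le> N"
    using encT inS unfolding Qs_def T_def by fastforce
  ultimately show ?thesis unfolding in_F_O1_def by blast
qed


theorem proposition6p5:
  fixes L :: "('a::finite) list set" and a :: 'a
    and Q :: "'s set" and q0 :: 's and \<delta> :: "'s \<Rightarrow> 'a \<Rightarrow> 's" and F :: "'s set"
  assumes "regular L"
    and "minimal_dfa L Q q0 \<delta> F"
  shows "in_F_O1 a L \<longleftrightarrow>
    (\<forall>x y z. length x = length y \<longrightarrow> length z = card Q \<longrightarrow>
       foldl \<delta> q0 (x @ z) = foldl \<delta> q0 (y @ z))"
  using forward[OF assms(2)] backward[OF assms(2)] by blast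

end
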